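(* Let $f:\mathbb{R}^k\to\mathbb{R}$ be a $C^1$ function and fix a constant $0<\alpha<1$. Let $\{x_n\}_{n\ge 0}$ be a sequence in $\mathbb{R}^k$ and $\{\delta_n\}_{n\ge 0}$ a sequence of positive numbers such that for every $n$, $x_{n+1}=x_n-\delta_n\nabla f(x_n)$ and Armijo's condition $f(x_n-\delta_n\nabla f(x_n))-f(x_n)\le -\alpha\delta_n\|\nabla f(x_n)\|^2$ holds. Assume that $\nabla f(x_n)\neq 0$ for all $n$, and that $\{x_n\}$ converges to a point $x_\infty$ which is a non-degenerate critical point of $f$, i.e. $\nabla f(x_\infty)=0$, $f$ is $C^2$ in a neighbourhood of $x_\infty$, and the Hessian $\nabla^2 f(x_\infty)$ is invertible. Then for every $\epsilon>0$ there exists $n_\epsilon$ such that for all $n\ge n_\epsilon$, $$\alpha\delta_n\le \frac12\left(\|\nabla^2 f(x_\infty)\|+\epsilon\right)\left(\|\nabla^2 f(x_\infty)^{-1}\|+\epsilon\right)^2.$$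
   Context: $\|\cdot\|$ denotes the Euclidean norm on vectors and the corresponding operator norm on matrices. *)

theory Defs
  imports "HOL-Analysis.Analysis"
begin

end

theory Submission
  imports Defs
begin

lemma matrix_inv_left_vec:
  fixes H :: "real^'n^'n"
  assumes "invertible H"
  shows "matrix_inv H *v (H *v v) = v"
proof -
  have "matrix_inv H ** H = mat 1"
    using someI_ex[OF assms[unfolded invertible_def]] unfolding matrix_inv_def by blast
  then show ?thesis by (simp add: matrix_vector_mul_assoc matrix_vector_mul_lid)
qed

lemma taylor_upper:
  fixes f :: "real^'k \<Rightarrow> real" and gradf :: "real^'k \<Rightarrow> real^'k"
  assumes grad: "\<And>y. (f has_derivative (\<lambda>h. gradf y \<bullet> h)) (at y)"
    and bnd: "\<And>w. norm (w - x0) < d \<Longrightarrow> norm (gradf w) \<le> C * norm (w - x0)"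
    and hd: "norm h < d"
  shows "f (x0 + h) - f x0 \<le> C / 2 * (norm h)\<^sup>2"
proof -
  define \<phi> where "\<phi> t = f (x0 + t *\<^sub>R h) - C / 2 * t\<^sup>2 * (norm h)\<^sup>2" for t
  define \<phi>' where "\<phi>' t = gradf (x0 + t *\<^sub>R h) \<bullet> h - C * t * (norm h)\<^sup>2" for t
  have der: "(\<phi> has_real_derivative \<phi>' t) (at t)" for t
  proof -
    have d1: "((\<lambda>t. x0 + t *\<^sub>R h) has_derivative (\<lambda>s. s *\<^sub>R h)) (at t)"
      by (auto intro!: derivative_eq_intros)
    have "((\<lambda>t. f (x0 + t *\<^sub>R h)) has_derivative (\<lambda>s. gradf (x0 + t *\<^sub>R h) \<bullet> (s *\<^sub>R h))) (at t)"
      using has_derivative_compose[OF d1 grad] by (simp add: o_def)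
    moreover have "(\<lambda>s. gradf (x0 + t *\<^sub>R h) \<bullet> (s *\<^sub>R h)) = (*) (gradf (x0 + t *\<^sub>R h) \<bullet> h)"
      by (auto simp: fun_eq_iff)
    ultimately have "((\<lambda>t. f (x0 + t *\<^sub>R h)) has_real_derivative gradf (x0 + t *\<^sub>R h) \<bullet> h) (at t)"
      by (simp add: has_field_derivative_def)
    then show ?thesis unfolding \<phi>_def \<phi>'_def
      by (auto intro!: derivative_eq_intros)
  qed
  have "\<exists>z>0. z < 1 \<and> \<phi> 1 - \<phi> 0 = (1 - 0) * \<phi>' z"
    by (rule MVT2) (auto intro: der)
  then obtain z where z: "0 < z" "z < 1" "\<phi> 1 - \<phi> 0 = \<phi>' z" by auto
  have nz: "norm (z *\<^sub>R h) = z * norm h" using z by simp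
  have "norm (z *\<^sub>R h) < d"
  proof -
    have "z * norm h \<le> norm h" using z by (simp add: mult_left_le_one_le)
    then show ?thesis using nz hd by linarith
  qed
  then have g: "norm (gradf (x0 + z *\<^sub>R h)) \<le> C * (z * norm h)"
    using bnd[of "x0 + z *\<^sub>R h"] nz by (simp add: abs_of_pos[OF z(1)])
  have "gradf (x0 + z *\<^sub>R h) \<bullet> h \<le> norm (gradf (x0 + z *\<^sub>R h)) * norm h"
    by (rule norm_cauchy_schwarz)
  also have "\<dots> \<le> C * (z * norm h) * norm h"
    using g by (simp add: mult_right_mono)
  finally have "\<phi>' z \<le> 0" unfolding \<phi>'_def by (simp add: power2_eq_square algebra_simps)
  then have "\<phi> 1 \<le> \<phi> 0" using z by simp
  then show ?thesis unfolding \<phi>_def by simp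
qed

theorem theorem1:
  fixes f :: "real^'k \<Rightarrow> real"
    and gradf :: "real^'k \<Rightarrow> real^'k"
    and hessf :: "real^'k \<Rightarrow> real^'k^'k"
    and \<alpha> :: real
    and x :: "nat \<Rightarrow> real^'k"
    and \<delta> :: "nat \<Rightarrow> real"
    and x_inf :: "real^'k"
    and U :: "(real^'k) set"
  assumes grad: "\<And>y. (f has_derivative (\<lambda>h. gradf y \<bullet> h)) (at y)"
    and grad_cont: "continuous_on UNIV gradf"
    and alpha: "0 < \<alpha>" "\<alpha> < 1"
    and delta_pos: "\<And>n. 0 < \<delta> n"
    and step: "\<And>n. x (Suc n) = x n - \<delta> n *\<^sub>R gradf (x n)"
    and armijo: "\<And>n. f (x n - \<delta> n *\<^sub>R gradf (x n)) - f (x n)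
                        \<le> - \<alpha> * \<delta> n * (norm (gradf (x n)))\<^sup>2"
    and grad_nz: "\<And>n. gradf (x n) \<noteq> 0"
    and conv: "x \<longlonglongrightarrow> x_inf"
    and crit: "gradf x_inf = 0"
    and U_open: "open U" and U_mem: "x_inf \<in> U"
    and hess: "\<And>y. y \<in> U \<Longrightarrow> (gradf has_derivative (\<lambda>h. hessf y *v h)) (at y)"
    and hess_cont: "continuous_on U hessf"
    and nondeg: "invertible (hessf x_inf)"
  shows "\<forall>\<epsilon>>0. \<exists>N. \<forall>n\<ge>N. \<alpha> * \<delta> n \<le>
           1/2 * (onorm (\<lambda>v. hessf x_inf *v v) + \<epsilon>)
               * (onorm (\<lambda>v. matrix_inv (hessf x_inf) *v v) + \<epsilon>)\<^sup>2"
proof (intro allI impI)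
  fix \<epsilon> :: real assume ep: "\<epsilon> > 0"
  define H where "H = hessf x_inf"
  define A where "A = onorm (\<lambda>v. H *v v)"
  define B where "B = onorm (\<lambda>v. matrix_inv H *v v)"
  have A0: "A \<ge> 0" unfolding A_def by (rule onorm_pos_le) (rule matrix_vector_mul_bounded_linear)
  have B0: "B \<ge> 0" unfolding B_def by (rule onorm_pos_le) (rule matrix_vector_mul_bounded_linear)
  have Ab: "norm (H *v v) \<le> A * norm v" for v
    unfolding A_def by (rule onorm) (rule matrix_vector_mul_bounded_linear)
  have Bb: "norm (matrix_inv H *v v) \<le> B * norm v" for v
    unfolding B_def by (rule onorm) (rule matrix_vector_mul_bounded_linear)
  have inv: "matrix_inv H *v (H *v v) = v" for v
    using matrix_inv_left_vec nondeg unfolding H_def by blast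
  define \<eta> where "\<eta> = min \<epsilon> (\<epsilon> / ((B + \<epsilon>) * (B + 1)))"
  have \<eta>0: "\<eta> > 0" unfolding \<eta>_def using ep B0 by auto
  have \<eta>1: "\<eta> \<le> \<epsilon>" unfolding \<eta>_def by simp
  have \<eta>2: "(B + \<epsilon>) * B * \<eta> \<le> \<epsilon>"
  proof -
    have "(B + \<epsilon>) * B * \<eta> \<le> (B + \<epsilon>) * B * (\<epsilon> / ((B + \<epsilon>) * (B + 1)))"
      using B0 ep unfolding \<eta>_def by (intro mult_left_mono) auto
    also have "\<dots> = \<epsilon> * (B / (B + 1))"
    proof -
      have "B + \<epsilon> \<noteq> 0" "B + 1 \<noteq> 0" using B0 ep by auto
      then have "(B + \<epsilon>) * B * (\<epsilon> / ((B + \<epsilon>) * (B + 1))) = ((B + \<epsilon>) * (B * \<epsilon>)) / ((B + \<epsilon>) * (B + 1))"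
        by (simp add: mult.assoc)
      also have "\<dots> = (B * \<epsilon>) / (B + 1)" using \<open>B + \<epsilon> \<noteq> 0\<close> by (rule mult_divide_mult_cancel_left)
      finally show ?thesis by simp
    qed
    also have "\<dots> \<le> \<epsilon>"
    proof -
      have "B / (B + 1) \<le> 1" using B0 by simp
      then show ?thesis using ep by (intro mult_left_le) auto
    qed
    finally show ?thesis .
  qed
  have "(gradf has_derivative (\<lambda>h. H *v h)) (at x_inf)"
    using hess[OF U_mem] unfolding H_def .
  then obtain d where d0: "d > 0" and dd: "\<And>y. norm (y - x_inf) < d \<Longrightarrow>
      norm (gradf y - gradf x_inf - H *v (y - x_inf)) \<le> \<eta> * norm (y - x_inf)"
    unfolding has_derivative_at_alt using \<eta>0 by blast
  have err: "norm (gradf y - H *v (y - x_inf)) \<le> \<eta> * norm (y - x_inf)"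
    if "norm (y - x_inf) < d" for y using dd[OF that] crit by simp
  have gup: "norm (gradf w) \<le> (A + \<epsilon>) * norm (w - x_inf)" if "norm (w - x_inf) < d" for w
  proof -
    have "norm (gradf w) \<le> norm (H *v (w - x_inf)) + norm (gradf w - H *v (w - x_inf))"
      using norm_triangle_ineq[of "H *v (w - x_inf)" "gradf w - H *v (w - x_inf)"] by simp
    also have "\<dots> \<le> A * norm (w - x_inf) + \<eta> * norm (w - x_inf)"
      using Ab err[OF that] by (intro add_mono) auto
    also have "\<dots> \<le> (A + \<epsilon>) * norm (w - x_inf)"
      using \<eta>1 by (simp add: distrib_right mult_right_mono)
    finally show ?thesis .
  qed
  have glow: "norm (w - x_inf) \<le> (B + \<epsilon>) * norm (gradf w)" if "norm (w - x_inf) < d" for w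
  proof -
    let ?r = "norm (w - x_inf)"
    have "w - x_inf = matrix_inv H *v (H *v (w - x_inf))" by (simp add: inv)
    also have "H *v (w - x_inf) = gradf w - (gradf w - H *v (w - x_inf))" by simp
    finally have "?r = norm (matrix_inv H *v (gradf w - (gradf w - H *v (w - x_inf))))" by simp
    also have "\<dots> \<le> B * norm (gradf w - (gradf w - H *v (w - x_inf)))" by (rule Bb)
    also have "\<dots> \<le> B * (norm (gradf w) + \<eta> * ?r)"
    proof -
      have "norm (gradf w - (gradf w - H *v (w - x_inf))) \<le> norm (gradf w) + norm (gradf w - H *v (w - x_inf))"
        by (rule norm_triangle_ineq4)
      then have "norm (gradf w - (gradf w - H *v (w - x_inf))) \<le> norm (gradf w) + \<eta> * ?r"
        using err[OF that] by linarith
      then show ?thesis using B0 by (rule mult_left_mono)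
    qed
    finally have r1: "?r \<le> B * norm (gradf w) + B * \<eta> * ?r" by (simp add: algebra_simps)
    have "(B + \<epsilon>) * ?r \<le> (B + \<epsilon>) * (B * norm (gradf w) + B * \<eta> * ?r)"
      using r1 B0 ep by (intro mult_left_mono) auto
    also have "\<dots> = (B + \<epsilon>) * B * norm (gradf w) + ((B + \<epsilon>) * B * \<eta>) * ?r"
      by (simp add: algebra_simps)
    also have "\<dots> \<le> (B + \<epsilon>) * B * norm (gradf w) + \<epsilon> * ?r"
      using \<eta>2 by (intro add_left_mono mult_right_mono) auto
    finally have "B * ?r \<le> (B + \<epsilon>) * B * norm (gradf w)" by (simp add: algebra_simps)
    then have "?r \<le> (B + \<epsilon>) * norm (gradf w) \<or> B = 0"
      using B0 by (auto simp: mult.commute mult.left_commute)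
    moreover have "B = 0 \<Longrightarrow> ?r \<le> (B + \<epsilon>) * norm (gradf w)"
    proof -
      assume "B = 0"
      then have "?r \<le> 0" using r1 by simp
      moreover have "0 \<le> (B + \<epsilon>) * norm (gradf w)" using \<open>B = 0\<close> ep by simp
      ultimately show ?thesis by linarith
    qed
    ultimately show ?thesis by blast
  qed
  have tay: "f w - f x_inf \<le> (A + \<epsilon>) / 2 * (norm (w - x_inf))\<^sup>2" if "norm (w - x_inf) < d" for w
    using taylor_upper[OF grad gup, where h = "w - x_inf"] that by simp
  (* monotonicity *)
  have dec: "f (x (Suc n)) \<le> f (x n)" for n
  proof -
    have "0 \<le> \<alpha> * \<delta> n * (norm (gradf (x n)))\<^sup>2" using alpha delta_pos[of n] by simp
    then show ?thesis using armijo[of n] step[of n] by simp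
  qed
  have "antimono (\<lambda>n. f (x n))" using dec by (simp add: antimono_iff_le_Suc)
  moreover have "(\<lambda>n. f (x n)) \<longlonglongrightarrow> f x_inf"
    using isCont_tendsto_compose[OF _ conv] has_derivative_continuous[OF grad] by blast
  ultimately have lowf: "f x_inf \<le> f (x n)" for n by (rule decseq_ge)
  from conv d0 have "eventually (\<lambda>n. dist (x n) x_inf < d) sequentially"
    by (rule tendstoD)
  then obtain N where N: "\<And>n. n \<ge> N \<Longrightarrow> norm (x n - x_inf) < d"
    unfolding eventually_sequentially dist_norm by blast
  show "\<exists>N. \<forall>n\<ge>N. \<alpha> * \<delta> n \<le> 1/2 * (onorm (\<lambda>v. hessf x_inf *v v) + \<epsilon>)
               * (onorm (\<lambda>v. matrix_inv (hessf x_inf) *v v) + \<epsilon>)\<^sup>2"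
  proof (intro exI allI impI)
    fix n assume n: "n \<ge> N"
    let ?g = "norm (gradf (x n))"
    have gpos: "?g > 0" using grad_nz by simp
    have "\<alpha> * \<delta> n * ?g\<^sup>2 \<le> f (x n) - f (x (Suc n))" using armijo[of n] step[of n] by simp
    also have "\<dots> \<le> f (x n) - f x_inf" using lowf[of "Suc n"] by simp
    also have "\<dots> \<le> (A + \<epsilon>) / 2 * (norm (x n - x_inf))\<^sup>2" using tay N[OF n] by blast
    also have "\<dots> \<le> (A + \<epsilon>) / 2 * ((B + \<epsilon>) * ?g)\<^sup>2"
      using A0 ep glow[OF N[OF n]] by (intro mult_left_mono power_mono) auto
    also have "\<dots> = (1/2 * (A + \<epsilon>) * (B + \<epsilon>)\<^sup>2) * ?g\<^sup>2"
      by (simp only: power_mult_distrib)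
    finally have "\<alpha> * \<delta> n * ?g\<^sup>2 \<le> (1/2 * (A + \<epsilon>) * (B + \<epsilon>)\<^sup>2) * ?g\<^sup>2" .
    then have "\<alpha> * \<delta> n \<le> 1/2 * (A + \<epsilon>) * (B + \<epsilon>)\<^sup>2"
      using gpos by (simp add: mult_le_cancel_right)
    then show "\<alpha> * \<delta> n \<le> 1/2 * (onorm (\<lambda>v. hessf x_inf *v v) + \<epsilon>)
               * (onorm (\<lambda>v. matrix_inv (hessf x_inf) *v v) + \<epsilon>)\<^sup>2"
      unfolding A_def B_def H_def .
  qed
qed

end
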